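(* Let $\mathcal H$ be a real Hilbert space, let $f:\mathcal H\to\mathbb R$ be convex and twice continuously differentiable with $\operatorname{argmin}_{\mathcal H} f\neq\emptyset$, let $t_0>0$, $\alpha>3$ and $\beta\ge 0$. Let $u:[t_0,+\infty[\to\mathcal H$ be a classical solution of $$\text{(TOGES-VH)}\quad \dddot u(t)+\frac{\alpha+7}{t}\ddot u(t)+\frac{5(\alpha+1)}{t^2}\dot u(t)+\beta\,\nabla^2 f\Big(u(t)+\tfrac14 t\dot u(t)\Big)\Big(\tfrac54\dot u(t)+\tfrac14 t\ddot u(t)\Big)+\nabla f\Big(u(t)+\tfrac14 t\dot u(t)\Big)=0 .$$ Fix $z\in\operatorname{argmin}_{\mathcal H}f$ and define, for $t\ge t_0$, $$E(t)=4(t^3-2\beta t^2)\Big(f\big(u(t)+\tfrac14 t\dot u(t)\big)-\inf_{\mathcal H}f\Big)+\frac12\Big\|t^2\Big(\ddot u(t)+\beta\nabla f\big(u(t)+\tfrac14 t\dot u(t)\big)\Big)+(\alpha+5)t\dot u(t)+4\alpha(u(t)-z)\Big\|^2 .$$ Let $t_1:=\max\Big\{t_0,\ \frac{2\beta(\alpha-2)}{\alpha-3}\Big\}$ and $F(u(t_1)):=f(u(t_1))-\inf_{\mathcal H}f$. Then: (i) for all $t\ge t_1$, $$f\big(u(t)+\tfrac14 t\dot u(t)\big)-\inf_{\mathcal H} f\le \frac{(\alpha-2)E(t_1)}{4t^3},$$ $$f(u(t))-\inf_{\mathcal H}f\le \big(t_1^4F(u(t_1))-(\alpha-2)E(t_1)\,t_1\big)\frac{1}{t^4}+\frac{(\alpha-2)E(t_1)}{t^3},$$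 and the function $t\mapsto f(u(t))+\frac{(\alpha-2)E(t_1)}{3t^3}$ is nonincreasing on $[t_1,+\infty[$; (ii) if moreover $\beta>0$, then $$\int_{t_1}^{+\infty} t^4\Big\|\nabla f\big(u(t)+\tfrac14 t\dot u(t)\big)\Big\|^2\,dt\le\frac{(\alpha-2)E(t_1)}{\beta}.$$
   Context: $\nabla^2 f(x)\in\mathcal L(\mathcal H,\mathcal H)$ denotes the Hessian of $f$ at $x$, and $\nabla^2 f(x)(\xi)$ its action on $\xi\in\mathcal H$. $\dot u,\ddot u,\dddot u$ are time derivatives of $u$. *)

theory Defs
  imports "HOL-Analysis.Analysis"
begin

end

theory Submission
  imports Defs
begin

lemma grad_ineq:
  fixes f :: "'a::real_inner \<Rightarrow> real"
  assumes cvx: "convex_on UNIV f" and grad: "\<And>x. (f has_derivative (\<lambda>h. gradf x \<bullet> h)) (at x)"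
  shows "f x + gradf x \<bullet> (y - x) \<le> f y"
proof -
  define d where "d = y - x"
  define \<phi> where "\<phi> = (\<lambda>s::real. f (x + s *\<^sub>R d))"
  have c: "convex_on UNIV \<phi>"
    unfolding convex_on_def \<phi>_def
  proof (intro conjI ballI allI impI)
    fix a b p q :: real assume pq: "0 \<le> p" "0 \<le> q" "p + q = 1"
    have e1: "p *\<^sub>R (x + a *\<^sub>R d) + q *\<^sub>R (x + b *\<^sub>R d) = (p *\<^sub>R x + q *\<^sub>R x) + (p *\<^sub>R a + q *\<^sub>R b) *\<^sub>R d"
      by (simp add: algebra_simps)
    have e2: "p *\<^sub>R x + q *\<^sub>R x = x" using pq by (metis scaleR_add_left scaleR_one)
    have "x + (p *\<^sub>R a + q *\<^sub>R b) *\<^sub>R d = p *\<^sub>R (x + a *\<^sub>R d) + q *\<^sub>R (x + b *\<^sub>R d)"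
      unfolding e1 e2 ..
    then show "f (x + (p *\<^sub>R a + q *\<^sub>R b) *\<^sub>R d) \<le> p * f (x + a *\<^sub>R d) + q * f (x + b *\<^sub>R d)"
      using cvx pq unfolding convex_on_def by auto
  qed simp
  have aff: "((\<lambda>s. x + s *\<^sub>R d) has_derivative (\<lambda>h. h *\<^sub>R d)) (at 0)"
    by (auto intro!: derivative_eq_intros)
  have g0: "(f has_derivative (\<lambda>h. gradf x \<bullet> h)) (at ((\<lambda>s. x + s *\<^sub>R d) 0))"
    using grad[of x] by simp
  from has_derivative_compose[OF aff g0]
  have "(\<phi> has_derivative (\<lambda>h. gradf x \<bullet> (h *\<^sub>R d))) (at 0)"
    unfolding \<phi>_def .
  moreover have "(\<lambda>h. gradf x \<bullet> (h *\<^sub>R d)) = (*) (gradf x \<bullet> d)"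
    by (auto simp: mult.commute)
  ultimately have "(\<phi> has_field_derivative (gradf x \<bullet> d)) (at 0 within UNIV)"
    unfolding has_field_derivative_def by simp
  from convex_on_imp_above_tangent[OF c _ _ _ this, of 1]
  have "\<phi> 1 - \<phi> 0 \<ge> gradf x \<bullet> d" by simp
  then show ?thesis unfolding \<phi>_def d_def by simp
qed

lemma chain_real:
  assumes "(v has_vector_derivative v') (at t within S)"
    and "(f has_derivative (\<lambda>h. gradf (v t) \<bullet> h)) (at (v t))"
  shows "((\<lambda>t. f (v t)) has_real_derivative (gradf (v t) \<bullet> v')) (at t within S)"
proof -
  have "((\<lambda>t. f (v t)) has_derivative (\<lambda>h. gradf (v t) \<bullet> (h *\<^sub>R v'))) (at t within S)"
    using has_derivative_compose[OF assms(1)[unfolded has_vector_derivative_def] assms(2)] .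
  moreover have "(\<lambda>h. gradf (v t) \<bullet> (h *\<^sub>R v')) = (*) (gradf (v t) \<bullet> v')"
    by (auto simp: mult.commute)
  ultimately show ?thesis unfolding has_field_derivative_def by simp
qed

lemma chain_vec:
  assumes "(v has_vector_derivative v') (at t within S)"
    and "(g has_derivative blinfun_apply H) (at (v t))"
  shows "((\<lambda>t. g (v t)) has_vector_derivative (blinfun_apply H v')) (at t within S)"
proof -
  have "((\<lambda>t. g (v t)) has_derivative (\<lambda>h. blinfun_apply H (h *\<^sub>R v'))) (at t within S)"
    using has_derivative_compose[OF assms(1)[unfolded has_vector_derivative_def] assms(2)] .
  then show ?thesis unfolding has_vector_derivative_def by (simp add: blinfun.scaleR_right)
qed

lemma inner_sq_deriv:
  fixes w :: "real \<Rightarrow> 'a::real_inner"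
  assumes "(w has_vector_derivative w') (at t within S)"
  shows "((\<lambda>t. w t \<bullet> w t) has_real_derivative (2 * (w t \<bullet> w'))) (at t within S)"
proof -
  have "((\<lambda>t. w t \<bullet> w t) has_vector_derivative (w t \<bullet> w' + w' \<bullet> w t)) (at t within S)"
    by (rule bounded_bilinear.has_vector_derivative[OF bounded_bilinear_inner assms assms])
  then show ?thesis unfolding has_real_derivative_iff_has_vector_derivative
    by (simp add: inner_commute)
qed

lemma ftc_le:
  fixes \<phi> :: "real \<Rightarrow> real"
  assumes "a \<le> b" "\<And>x. x \<in> {a..b} \<Longrightarrow> (\<phi> has_real_derivative \<phi>' x) (at x within {c..})"
    "c \<le> a" "\<And>x. x\<in>{a..b} \<Longrightarrow> \<phi>' x \<le> k x" "(k has_integral K) {a..b}"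
  shows "\<phi> b - \<phi> a \<le> K"
proof -
  have "(\<phi> has_vector_derivative \<phi>' x) (at x within {a..b})" if "x \<in> {a..b}" for x
    by (rule has_vector_derivative_within_subset[OF assms(2)[OF that, unfolded has_real_derivative_iff_has_vector_derivative]])
       (use assms(3) in auto)
  from fundamental_theorem_of_calculus[OF assms(1) this]
  show ?thesis using has_integral_le assms(4,5) by blast
qed
lemma A1: fixes x y :: "'a::real_vector" and t::real
  shows "x + ((t/4) *\<^sub>R y + (1/4) *\<^sub>R x) = (5/4) *\<^sub>R x + (t/4) *\<^sub>R y"
proof -
  have "(5/4::real) *\<^sub>R x = (1 + 1/4) *\<^sub>R x" by simp
  also have "\<dots> = x + (1/4) *\<^sub>R x" by (simp only: scaleR_add_left scaleR_one)
  finally show ?thesis by (simp add: algebra_simps)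
qed

lemma A2: fixes a b c d e :: "'a::real_vector" and t \<alpha> \<beta> :: real
  assumes t: "t \<noteq> 0" and a: "a = -(((\<alpha>+7)/t) *\<^sub>R b + (5*(\<alpha>+1)/t\<^sup>2) *\<^sub>R c + \<beta> *\<^sub>R d + e)"
  shows "(2*t) *\<^sub>R (b + \<beta> *\<^sub>R e) + t\<^sup>2 *\<^sub>R (a + \<beta> *\<^sub>R d) + (\<alpha>+5) *\<^sub>R c + ((\<alpha>+5)*t) *\<^sub>R b + (4*\<alpha>) *\<^sub>R c = (-(t\<^sup>2 - 2*\<beta>*t)) *\<^sub>R e"
proof -
  have ta: "t\<^sup>2 *\<^sub>R a = -(((\<alpha>+7)*t) *\<^sub>R b + (5*(\<alpha>+1)) *\<^sub>R c + (\<beta>*t\<^sup>2) *\<^sub>R d + t\<^sup>2 *\<^sub>R e)"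
  proof -
    have c1: "t\<^sup>2 * ((\<alpha>+7)/t) = (\<alpha>+7)*t" and c2: "t\<^sup>2 * (5*(\<alpha>+1)/t\<^sup>2) = 5*(\<alpha>+1)"
      using t by (simp_all add: power2_eq_square field_simps)
    show ?thesis by (simp only: a scaleR_minus_right scaleR_add_right scaleR_scaleR c1 c2) (simp add: mult.commute)
  qed
  have g1: "(2*t) *\<^sub>R b + ((\<alpha>+5)*t) *\<^sub>R b - ((\<alpha>+7)*t) *\<^sub>R b = 0"
    by (simp only: scaleR_add_left[symmetric] scaleR_diff_left[symmetric]) (simp add: algebra_simps)
  have g2: "(\<alpha>+5) *\<^sub>R c + (4*\<alpha>) *\<^sub>R c - (5*(\<alpha>+1)) *\<^sub>R c = 0"
    by (simp only: scaleR_add_left[symmetric] scaleR_diff_left[symmetric]) (simp add: algebra_simps)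
  have g4: "(2*t*\<beta>) *\<^sub>R e - t\<^sup>2 *\<^sub>R e = (-(t\<^sup>2 - 2*\<beta>*t)) *\<^sub>R e"
    by (simp only: scaleR_diff_left[symmetric]) (simp add: algebra_simps)
  have "(2*t) *\<^sub>R (b + \<beta> *\<^sub>R e) + t\<^sup>2 *\<^sub>R (a + \<beta> *\<^sub>R d) + (\<alpha>+5) *\<^sub>R c + ((\<alpha>+5)*t) *\<^sub>R b + (4*\<alpha>) *\<^sub>R c
     = ((2*t) *\<^sub>R b + ((\<alpha>+5)*t) *\<^sub>R b - ((\<alpha>+7)*t) *\<^sub>R b) + ((\<alpha>+5) *\<^sub>R c + (4*\<alpha>) *\<^sub>R c - (5*(\<alpha>+1)) *\<^sub>R c) + ((\<beta>*t\<^sup>2) *\<^sub>R d - (\<beta>*t\<^sup>2) *\<^sub>R d) + ((2*t*\<beta>) *\<^sub>R e - t\<^sup>2 *\<^sub>R e)"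
    by (simp add: ta algebra_simps)
  also have "\<dots> = (-(t\<^sup>2 - 2*\<beta>*t)) *\<^sub>R e"
    by (simp only: g1 g2 g4) simp
  finally show ?thesis .
qed

lemma A3: fixes u u1 u2 g z :: "'a::real_vector" and t \<alpha> \<beta> :: real
  shows "(t\<^sup>2) *\<^sub>R (u2 + \<beta> *\<^sub>R g) + ((\<alpha>+5)*t) *\<^sub>R u1 + (4*\<alpha>) *\<^sub>R (u - z)
     = (4*\<alpha>) *\<^sub>R ((u + (t/4) *\<^sub>R u1) - z) + (4*t) *\<^sub>R ((5/4) *\<^sub>R u1 + (t/4) *\<^sub>R u2) + (\<beta>*t\<^sup>2) *\<^sub>R g"
  by (simp add: algebra_simps power2_eq_square)


theorem theorem3p1:
  fixes f :: "'a::{real_inner, complete_space} \<Rightarrow> real"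
    and gradf :: "'a \<Rightarrow> 'a"
    and hessf :: "'a \<Rightarrow> ('a \<Rightarrow>\<^sub>L 'a)"
    and u u' u'' u''' :: "real \<Rightarrow> 'a"
    and t0 \<alpha> \<beta> :: real
    and z :: 'a
  assumes convex: "convex_on UNIV f"
    and grad: "\<And>x. (f has_derivative (\<lambda>h. gradf x \<bullet> h)) (at x)"
    and hess: "\<And>x. (gradf has_derivative blinfun_apply (hessf x)) (at x)"
    and hess_cont: "continuous_on UNIV hessf"
    and z_min: "\<And>x. f z \<le> f x"
    and t0_pos: "t0 > 0" and alpha_gt: "\<alpha> > 3" and beta_nonneg: "\<beta> \<ge> 0"
    and du: "\<And>t. t \<ge> t0 \<Longrightarrow> (u has_vector_derivative u' t) (at t within {t0..})"
    and ddu: "\<And>t. t \<ge> t0 \<Longrightarrow> (u' has_vector_derivative u'' t) (at t within {t0..})"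
    and dddu: "\<And>t. t \<ge> t0 \<Longrightarrow> (u'' has_vector_derivative u''' t) (at t within {t0..})"
    and dddu_cont: "continuous_on {t0..} u'''"
    and ode: "\<And>t. t \<ge> t0 \<Longrightarrow>
       u''' t + ((\<alpha> + 7) / t) *\<^sub>R u'' t + (5 * (\<alpha> + 1) / t\<^sup>2) *\<^sub>R u' t
       + \<beta> *\<^sub>R blinfun_apply (hessf (u t + (t / 4) *\<^sub>R u' t)) ((5/4) *\<^sub>R u' t + (t / 4) *\<^sub>R u'' t)
       + gradf (u t + (t / 4) *\<^sub>R u' t) = 0"
  defines "E \<equiv> (\<lambda>t. 4 * (t ^ 3 - 2 * \<beta> * t\<^sup>2) * (f (u t + (t / 4) *\<^sub>R u' t) - (INF x. f x))
       + (1/2) * (norm ((t\<^sup>2) *\<^sub>R (u'' t + \<beta> *\<^sub>R gradf (u t + (t / 4) *\<^sub>R u' t))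
                       + ((\<alpha> + 5) * t) *\<^sub>R u' t + (4 * \<alpha>) *\<^sub>R (u t - z)))\<^sup>2)"
    and "t1 \<equiv> max t0 (2 * \<beta> * (\<alpha> - 2) / (\<alpha> - 3))"
  shows "(\<forall>t\<ge>t1. f (u t + (t / 4) *\<^sub>R u' t) - (INF x. f x) \<le> (\<alpha> - 2) * E t1 / (4 * t ^ 3))
       \<and> (\<forall>t\<ge>t1. f (u t) - (INF x. f x) \<le>
             (t1 ^ 4 * (f (u t1) - (INF x. f x)) - (\<alpha> - 2) * E t1 * t1) * (1 / t ^ 4)
             + (\<alpha> - 2) * E t1 / t ^ 3)
       \<and> (\<forall>s t. t1 \<le> s \<longrightarrow> s \<le> t \<longrightarrow>
             f (u t) + (\<alpha> - 2) * E t1 / (3 * t ^ 3) \<le> f (u s) + (\<alpha> - 2) * E t1 / (3 * s ^ 3))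
       \<and> (\<beta> > 0 \<longrightarrow>
             (\<lambda>t. t ^ 4 * (norm (gradf (u t + (t / 4) *\<^sub>R u' t)))\<^sup>2) integrable_on {t1..}
           \<and> integral {t1..} (\<lambda>t. t ^ 4 * (norm (gradf (u t + (t / 4) *\<^sub>R u' t)))\<^sup>2)
               \<le> (\<alpha> - 2) * E t1 / \<beta>)"
proof -
  define m where "m = (INF x. f x)"
  have m: "m = f z" unfolding m_def by (rule cInf_eq_minimum) (auto intro: z_min)
  have fm: "m \<le> f x" for x using z_min m by simp
  define v where "v = (\<lambda>t. u t + (t / 4) *\<^sub>R u' t)"
  define v' where "v' = (\<lambda>t. (5/4) *\<^sub>R u' t + (t / 4) *\<^sub>R u'' t)"
  define g where "g = (\<lambda>t. gradf (v t))"
  define H where "H = (\<lambda>t. blinfun_apply (hessf (v t)) (v' t))"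
  define w where "w = (\<lambda>t. (t\<^sup>2) *\<^sub>R (u'' t + \<beta> *\<^sub>R g t) + ((\<alpha> + 5) * t) *\<^sub>R u' t + (4 * \<alpha>) *\<^sub>R (u t - z))"
  define w' where "w' = (\<lambda>t. (-(t\<^sup>2 - 2*\<beta>*t)) *\<^sub>R g t)"
  define E' where "E' = (\<lambda>t. 4*(3*t\<^sup>2 - 4*\<beta>*t)*(f (v t) - m) + 4*(t^3 - 2*\<beta>*t\<^sup>2)*(g t \<bullet> v' t) + (w t \<bullet> w' t))"
  have E_eq: "E = (\<lambda>t. 4*(t^3 - 2*\<beta>*t\<^sup>2)*(f (v t) - m) + (1/2)*(w t \<bullet> w t))"
    unfolding E_def v_def w_def g_def m_def by (simp add: power2_norm_eq_inner)
  have t1_ge: "t1 \<ge> t0" "t1 \<ge> 2*\<beta>*(\<alpha>-2)/(\<alpha>-3)" unfolding t1_def by auto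
  have t1_pos: "t1 > 0" using t0_pos t1_ge by linarith
  have key_t: "(\<alpha>-3)*t \<ge> 2*\<beta>*(\<alpha>-2)" if "t \<ge> t1" for t
  proof -
    have "2*\<beta>*(\<alpha>-2)/(\<alpha>-3) \<le> t" using that t1_ge by linarith
    then show ?thesis using alpha_gt by (simp add: pos_divide_le_eq mult.commute)
  qed
  have t2b: "t - 2*\<beta> \<ge> 0" if "t \<ge> t1" for t
  proof -
    have "(\<alpha>-3)*(t-2*\<beta>) \<ge> 0" using key_t[OF that] beta_nonneg by (simp add: algebra_simps)
    then show ?thesis using alpha_gt by (simp add: zero_le_mult_iff)
  qed

  have dv: "(v has_vector_derivative v' t) (at t within {t0..})" if "t \<ge> t0" for t
  proof -
    have "((\<lambda>t. u t + (t/4) *\<^sub>R u' t) has_vector_derivative (u' t + ((t/4) *\<^sub>R u'' t + (1/4) *\<^sub>R u' t))) (at t within {t0..})"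
      by (intro has_vector_derivative_add has_vector_derivative_scaleR du[OF that] ddu[OF that])
         (auto intro!: derivative_eq_intros)
    then show ?thesis unfolding v_def v'_def A1 .
  qed
  have dg: "(g has_vector_derivative H t) (at t within {t0..})" if "t \<ge> t0" for t
    unfolding g_def H_def by (rule chain_vec[where g=gradf, OF dv[OF that] hess[of "v t"]])
  have dfv: "((\<lambda>t. f (v t)) has_real_derivative (g t \<bullet> v' t)) (at t within {t0..})" if "t \<ge> t0" for t
    unfolding g_def by (rule chain_real[where gradf=gradf and f=f, OF dv[OF that] grad[of "v t"]])
  have ode': "u''' t = - (((\<alpha>+7)/t) *\<^sub>R u'' t + (5*(\<alpha>+1)/t\<^sup>2) *\<^sub>R u' t + \<beta> *\<^sub>R H t + g t)"
    if "t \<ge> t0" for t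
  proof -
    have "u''' t + (((\<alpha>+7)/t) *\<^sub>R u'' t + (5*(\<alpha>+1)/t\<^sup>2) *\<^sub>R u' t + \<beta> *\<^sub>R H t + g t) = 0"
      using ode[OF that] unfolding H_def g_def v_def v'_def by (simp only: add.assoc)
    then show ?thesis by (simp only: eq_neg_iff_add_eq_0)
  qed
  have dw: "(w has_vector_derivative w' t) (at t within {t0..})" if "t \<ge> t0" for t
  proof -
    have tnz: "t \<noteq> 0" using that t0_pos by auto
    have a1: "((\<lambda>t. t\<^sup>2) has_real_derivative 2*t) (at t within {t0..})"
      by (auto intro!: derivative_eq_intros)
    have a2: "((\<lambda>t. u'' t + \<beta> *\<^sub>R g t) has_vector_derivative (u''' t + \<beta> *\<^sub>R H t)) (at t within {t0..})"
      by (intro has_vector_derivative_add dddu[OF that]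
          bounded_linear.has_vector_derivative[OF bounded_linear_scaleR_right dg[OF that]])
    have a3: "((\<lambda>t. (\<alpha>+5)*t) has_real_derivative (\<alpha>+5)) (at t within {t0..})"
      by (auto intro!: derivative_eq_intros)
    have a4: "((\<lambda>t. (4*\<alpha>) *\<^sub>R (u t - z)) has_vector_derivative (4*\<alpha>) *\<^sub>R (u' t - 0)) (at t within {t0..})"
      by (intro bounded_linear.has_vector_derivative[OF bounded_linear_scaleR_right]
          has_vector_derivative_diff du[OF that] has_vector_derivative_const)
    have "(w has_vector_derivative
        ((t\<^sup>2 *\<^sub>R (u''' t + \<beta> *\<^sub>R H t) + (2*t) *\<^sub>R (u'' t + \<beta> *\<^sub>R g t))
         + (((\<alpha>+5)*t) *\<^sub>R u'' t + (\<alpha>+5) *\<^sub>R u' t) + (4*\<alpha>) *\<^sub>R (u' t - 0))) (at t within {t0..})"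
      unfolding w_def
      by (intro has_vector_derivative_add has_vector_derivative_scaleR[OF a1 a2]
          has_vector_derivative_scaleR[OF a3 ddu[OF that]] a4)
    moreover have "((t\<^sup>2 *\<^sub>R (u''' t + \<beta> *\<^sub>R H t) + (2*t) *\<^sub>R (u'' t + \<beta> *\<^sub>R g t))
         + (((\<alpha>+5)*t) *\<^sub>R u'' t + (\<alpha>+5) *\<^sub>R u' t) + (4*\<alpha>) *\<^sub>R (u' t - 0))
       = (2*t) *\<^sub>R (u'' t + \<beta> *\<^sub>R g t) + t\<^sup>2 *\<^sub>R (u''' t + \<beta> *\<^sub>R H t) + (\<alpha>+5) *\<^sub>R u' t + ((\<alpha>+5)*t) *\<^sub>R u'' t + (4*\<alpha>) *\<^sub>R u' t"
      by (simp add: algebra_simps)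
    moreover have "\<dots> = w' t" unfolding w'_def by (rule A2[OF tnz ode'[OF that]])
    ultimately show ?thesis by simp
  qed
  have dE: "(E has_real_derivative E' t) (at t within {t0..})" if "t \<ge> t0" for t
  proof -
    have b1: "((\<lambda>t. 4*(t^3 - 2*\<beta>*t\<^sup>2)) has_real_derivative 4*(3*t\<^sup>2 - 4*\<beta>*t)) (at t within {t0..})"
      by (auto intro!: derivative_eq_intros simp: algebra_simps power2_eq_square)
    have b2: "((\<lambda>t. f (v t) - m) has_real_derivative (g t \<bullet> v' t)) (at t within {t0..})"
      using DERIV_diff[OF dfv[OF that] DERIV_const[of m]] by simp
    have b3: "((\<lambda>t. (1/2) * (w t \<bullet> w t)) has_real_derivative (1/2) * (2 * (w t \<bullet> w' t))) (at t within {t0..})"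
      by (rule DERIV_cmult[OF inner_sq_deriv[OF dw[OF that]]])
    have "(E has_real_derivative (4*(3*t\<^sup>2 - 4*\<beta>*t) * (f (v t) - m) + (g t \<bullet> v' t) * (4*(t^3 - 2*\<beta>*t\<^sup>2))
          + (1/2) * (2 * (w t \<bullet> w' t)))) (at t within {t0..})"
      unfolding E_eq by (intro DERIV_add DERIV_mult b1 b2 b3)
    then show ?thesis by (rule DERIV_cong) (simp add: E'_def algebra_simps)
  qed

  have E'_le: "E' t \<le> -(\<beta>/(\<alpha>-2)) * (t^4 * (norm (g t))\<^sup>2)" if "t \<ge> t1" for t
  proof -
    have tpos: "t > 0" using that t1_pos by linarith
    define F where "F = f (v t) - m"
    define P where "P = g t \<bullet> (v t - z)"
    define N where "N = g t \<bullet> g t"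
    have F0: "F \<ge> 0" using fm unfolding F_def by simp
    have FP: "F \<le> P"
      using grad_ineq[OF convex grad, of "v t" z] unfolding F_def P_def g_def m
      by (simp add: inner_diff_right)
    have N0: "N \<ge> 0" unfolding N_def by simp
    have w_alt: "w t = (4*\<alpha>) *\<^sub>R (v t - z) + (4*t) *\<^sub>R v' t + (\<beta>*t\<^sup>2) *\<^sub>R g t"
      unfolding w_def v_def v'_def by (rule A3)
    have ww: "w t \<bullet> w' t = -(t\<^sup>2 - 2*\<beta>*t) * (4*\<alpha>*P + 4*t*(g t \<bullet> v' t) + \<beta>*t\<^sup>2*N)"
    proof -
      have "w t \<bullet> w' t = w' t \<bullet> w t" by (rule inner_commute)
      also have "\<dots> = -(t\<^sup>2 - 2*\<beta>*t) * (g t \<bullet> w t)" unfolding w'_def by simp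
      also have "g t \<bullet> w t = 4*\<alpha>*P + 4*t*(g t \<bullet> v' t) + \<beta>*t\<^sup>2*N"
        unfolding w_alt P_def N_def by (simp add: inner_add_right)
      finally show ?thesis .
    qed
    have E'e: "E' t = 4*(3*t\<^sup>2 - 4*\<beta>*t)*F - 4*\<alpha>*(t\<^sup>2 - 2*\<beta>*t)*P - \<beta>*t\<^sup>2*(t\<^sup>2 - 2*\<beta>*t)*N"
      unfolding E'_def ww F_def by (simp add: algebra_simps power2_eq_square power3_eq_cube)
    have tt: "t\<^sup>2 - 2*\<beta>*t \<ge> 0" using t2b[OF that] tpos
      by (simp add: power2_eq_square algebra_simps)
    have c1: "3*t\<^sup>2 - 4*\<beta>*t \<le> \<alpha>*(t\<^sup>2 - 2*\<beta>*t)"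
    proof -
      have "\<alpha>*(t\<^sup>2 - 2*\<beta>*t) - (3*t\<^sup>2 - 4*\<beta>*t) = t * ((\<alpha>-3)*t - 2*\<beta>*(\<alpha>-2))"
        by (simp add: algebra_simps power2_eq_square)
      also have "\<dots> \<ge> 0" using key_t[OF that] tpos by simp
      finally show ?thesis by simp
    qed
    have "(3*t\<^sup>2 - 4*\<beta>*t)*F \<le> (\<alpha>*(t\<^sup>2 - 2*\<beta>*t))*F" using c1 F0 by (rule mult_right_mono)
    also have "\<dots> \<le> (\<alpha>*(t\<^sup>2 - 2*\<beta>*t))*P" using FP tt alpha_gt by (intro mult_left_mono) auto
    finally have X: "(3*t\<^sup>2 - 4*\<beta>*t)*F \<le> (\<alpha>*(t\<^sup>2 - 2*\<beta>*t))*P" .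
    have E'e2: "E' t = 4*((3*t\<^sup>2 - 4*\<beta>*t)*F) - 4*((\<alpha>*(t\<^sup>2 - 2*\<beta>*t))*P) - \<beta>*t\<^sup>2*(t\<^sup>2 - 2*\<beta>*t)*N"
      unfolding E'e by (simp add: algebra_simps)
    have "E' t \<le> - \<beta>*t\<^sup>2*(t\<^sup>2 - 2*\<beta>*t)*N" unfolding E'e2 using X by linarith
    moreover have "\<beta>*(t^4*N) \<le> (\<alpha>-2)*(\<beta>*t\<^sup>2*(t\<^sup>2 - 2*\<beta>*t)*N)"
    proof -
      have "(\<alpha>-2)*(\<beta>*t\<^sup>2*(t\<^sup>2 - 2*\<beta>*t)*N) - \<beta>*(t^4*N) = (\<beta>*t^3*N) * ((\<alpha>-3)*t - 2*\<beta>*(\<alpha>-2))"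
        by (simp add: algebra_simps power2_eq_square power3_eq_cube power4_eq_xxxx)
      also have "\<dots> \<ge> 0" using key_t[OF that] tpos beta_nonneg N0 by simp
      finally show ?thesis by simp
    qed
    moreover have "(\<alpha>-2)*(\<beta>*t\<^sup>2*(t\<^sup>2 - 2*\<beta>*t)*N) \<le> (\<alpha>-2) * (- E' t)"
      if "E' t \<le> - \<beta>*t\<^sup>2*(t\<^sup>2 - 2*\<beta>*t)*N"
      using that alpha_gt by (intro mult_left_mono) auto
    ultimately have "\<beta>*(t^4*N) \<le> (\<alpha>-2) * (- E' t)" by (meson order_trans)
    then have "\<beta>*(t^4*N)/(\<alpha>-2) \<le> - E' t" using alpha_gt by (simp add: pos_divide_le_eq mult.commute)
    then show ?thesis unfolding N_def by (simp add: power2_norm_eq_inner)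
  qed
  have E'_nonpos: "E' t \<le> 0" if "t \<ge> t1" for t
  proof -
    have "0 \<le> (\<beta>/(\<alpha>-2)) * (t^4 * (norm (g t))\<^sup>2)" using alpha_gt beta_nonneg by simp
    then show ?thesis using E'_le[OF that] by linarith
  qed
  have E_mono: "E T \<le> E s" if "t1 \<le> s" "s \<le> T" for s T
  proof -
    have "E T - E s \<le> 0"
      by (rule ftc_le[where k="\<lambda>_. 0" and c=t0, OF that(2) dE _ E'_nonpos])
         (use that t1_ge in auto)
    then show ?thesis by simp
  qed
  have E_nonneg: "E t \<ge> 0" if "t \<ge> t1" for t
  proof -
    have "t^3 - 2*\<beta>*t\<^sup>2 = t\<^sup>2 * (t - 2*\<beta>)" by (simp add: algebra_simps power2_eq_square power3_eq_cube)
    also have "\<dots> \<ge> 0" using t2b[OF that] by simp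
    finally have "0 \<le> 4*(t^3 - 2*\<beta>*t\<^sup>2)*(f (v t) - m)" using fm by simp
    then show ?thesis unfolding E_eq by simp
  qed
  define c where "c = (\<alpha> - 2) * E t1"
  have fv_bound: "4 * t^3 * (f (v t) - m) \<le> c" if "t \<ge> t1" for t
  proof -
    have tpos: "t > 0" using that t1_pos by linarith
    have "(\<alpha>-2)*(t^3 - 2*\<beta>*t\<^sup>2) - t^3 = t\<^sup>2 * ((\<alpha>-3)*t - 2*\<beta>*(\<alpha>-2))"
      by (simp add: algebra_simps power2_eq_square power3_eq_cube)
    also have "\<dots> \<ge> 0" using key_t[OF that] by simp
    finally have "t^3 \<le> (\<alpha>-2)*(t^3 - 2*\<beta>*t\<^sup>2)" by simp
    then have "t^3 * (f (v t) - m) \<le> ((\<alpha>-2)*(t^3 - 2*\<beta>*t\<^sup>2)) * (f (v t) - m)"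
      using fm[of "v t"] by (intro mult_right_mono) auto
    then have "4 * (t^3 * (f (v t) - m)) \<le> 4 * (((\<alpha>-2)*(t^3 - 2*\<beta>*t\<^sup>2)) * (f (v t) - m))"
      by simp
    moreover have "4 * (t^3 * (f (v t) - m)) = 4 * t^3 * (f (v t) - m)" by (simp only: ac_simps)
    moreover have "4 * (((\<alpha>-2)*(t^3 - 2*\<beta>*t\<^sup>2)) * (f (v t) - m)) = (\<alpha>-2) * (4*(t^3 - 2*\<beta>*t\<^sup>2)*(f (v t) - m))"
      by (simp only: ac_simps)
    ultimately have "4 * t^3 * (f (v t) - m) \<le> (\<alpha>-2) * (4*(t^3 - 2*\<beta>*t\<^sup>2)*(f (v t) - m))"
      by simp
    also have "\<dots> \<le> (\<alpha>-2) * E t"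
      using alpha_gt by (intro mult_left_mono) (auto simp: E_eq)
    also have "\<dots> \<le> c" unfolding c_def using alpha_gt E_mono[OF order.refl that] by (intro mult_left_mono) auto
    finally show ?thesis .
  qed
  have part1: "\<forall>t\<ge>t1. f (u t + (t / 4) *\<^sub>R u' t) - (INF x. f x) \<le> (\<alpha> - 2) * E t1 / (4 * t ^ 3)"
  proof (intro allI impI)
    fix t assume t: "t \<ge> t1"
    have tpos: "t > 0" using t t1_pos by linarith
    show "f (u t + (t / 4) *\<^sub>R u' t) - (INF x. f x) \<le> (\<alpha> - 2) * E t1 / (4 * t ^ 3)"
      using fv_bound[OF t] tpos unfolding v_def m_def c_def by (simp add: pos_le_divide_eq mult.commute)
  qed
  have qbound: "t^4 * (gradf (u t) \<bullet> u' t) \<le> 4*t^3*(f (v t) - f (u t))" if "t \<ge> t1" for t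
  proof -
    have tpos: "t > 0" using that t1_pos by linarith
    have "gradf (u t) \<bullet> (v t - u t) \<le> f (v t) - f (u t)"
      using grad_ineq[OF convex grad, of "u t" "v t"] by simp
    moreover have "gradf (u t) \<bullet> (v t - u t) = (t/4) * (gradf (u t) \<bullet> u' t)" unfolding v_def by simp
    ultimately have "(t/4) * (gradf (u t) \<bullet> u' t) \<le> f (v t) - f (u t)" by simp
    then have "4*t^3 * ((t/4) * (gradf (u t) \<bullet> u' t)) \<le> 4*t^3*(f (v t) - f (u t))"
      using tpos by (intro mult_left_mono) auto
    then show ?thesis by (simp add: power4_eq_xxxx power3_eq_cube algebra_simps)
  qed
  have part3: "\<forall>s t. t1 \<le> s \<longrightarrow> s \<le> t \<longrightarrow>
             f (u t) + (\<alpha> - 2) * E t1 / (3 * t ^ 3) \<le> f (u s) + (\<alpha> - 2) * E t1 / (3 * s ^ 3)"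
  proof (intro allI impI)
    fix s T assume sT: "t1 \<le> s" "s \<le> T"
    define \<phi> where "\<phi> = (\<lambda>t. f (u t) + c / (3 * t ^ 3))"
    define \<phi>' where "\<phi>' = (\<lambda>t. gradf (u t) \<bullet> u' t - c / t^4)"
    have d\<phi>: "(\<phi> has_real_derivative \<phi>' t) (at t within {t0..})" if "t \<in> {s..T}" for t
    proof -
      have tge: "t \<ge> t0" using that sT t1_ge by auto
      have tpos: "t \<noteq> 0" using tge t0_pos by auto
      have "((\<lambda>t. c / (3 * t ^ 3)) has_real_derivative -c/t^4) (at t within {t0..})"
        using tpos by (auto intro!: derivative_eq_intros simp: field_simps power_eq_if)
      from DERIV_add[OF chain_real[where gradf=gradf and f=f, OF du[OF tge] grad[of "u t"]] this]
      show ?thesis unfolding \<phi>_def \<phi>'_def by simp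
    qed
    have "\<phi>' t \<le> 0" if "t \<in> {s..T}" for t
    proof -
      have t: "t \<ge> t1" using that sT by auto
      have tpos: "t > 0" using t t1_pos by linarith
      have "t^4 * (gradf (u t) \<bullet> u' t) \<le> c"
      proof -
        have "4*t^3*(f (v t) - f (u t)) \<le> 4*t^3*(f (v t) - m)"
          using fm[of "u t"] tpos by (intro mult_left_mono) auto
        then show ?thesis using qbound[OF t] fv_bound[OF t] by linarith
      qed
      then have "gradf (u t) \<bullet> u' t \<le> c / t^4" using tpos by (simp add: pos_le_divide_eq mult.commute)
      then show ?thesis unfolding \<phi>'_def by simp
    qed
    then have "\<phi> T - \<phi> s \<le> 0"
      by (intro ftc_le[where k="\<lambda>_. 0" and c=t0, OF sT(2) d\<phi>]) (use sT t1_ge in auto)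
    then show "f (u T) + (\<alpha> - 2) * E t1 / (3 * T ^ 3) \<le> f (u s) + (\<alpha> - 2) * E t1 / (3 * s ^ 3)"
      unfolding \<phi>_def c_def by simp
  qed
  have part2: "\<forall>t\<ge>t1. f (u t) - (INF x. f x) \<le>
             (t1 ^ 4 * (f (u t1) - (INF x. f x)) - (\<alpha> - 2) * E t1 * t1) * (1 / t ^ 4)
             + (\<alpha> - 2) * E t1 / t ^ 3"
  proof (intro allI impI)
    fix T assume T: "t1 \<le> T"
    have Tpos: "T > 0" using T t1_pos by linarith
    define h where "h = (\<lambda>t. t^4 * (f (u t) - m))"
    define h' where "h' = (\<lambda>t. 4*t^3 * (f (u t) - m) + (gradf (u t) \<bullet> u' t) * t^4)"
    have dh: "(h has_real_derivative h' t) (at t within {t0..})" if "t \<in> {t1..T}" for t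
    proof -
      have tge: "t \<ge> t0" using that t1_ge by auto
      have p: "((\<lambda>t. t^4) has_real_derivative 4*t^3) (at t within {t0..})"
        using DERIV_pow[of 4 t] by simp
      have q: "((\<lambda>t. f (u t) - m) has_real_derivative (gradf (u t) \<bullet> u' t)) (at t within {t0..})"
        using DERIV_diff[OF chain_real[where gradf=gradf and f=f, OF du[OF tge] grad[of "u t"]] DERIV_const[of m]] by simp
      show ?thesis unfolding h_def h'_def using DERIV_mult[OF p q] by simp
    qed
    have "h' t \<le> c" if "t \<in> {t1..T}" for t
    proof -
      have t: "t \<ge> t1" using that by auto
      have "h' t \<le> 4*t^3 * (f (u t) - m) + 4*t^3*(f (v t) - f (u t))"
        unfolding h'_def using qbound[OF t] by (simp add: mult.commute)
      also have "\<dots> = 4 * t^3 * (f (v t) - m)" by (simp add: algebra_simps)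
      also have "\<dots> \<le> c" by (rule fv_bound[OF t])
      finally show ?thesis .
    qed
    moreover have "((\<lambda>_. c) has_integral (T - t1) * c) {t1..T}"
      using has_integral_const_real[of c t1 T] T by simp
    ultimately have "h T - h t1 \<le> (T - t1) * c"
      by (intro ftc_le[where k="\<lambda>_. c" and c=t0, OF T dh]) (use t1_ge in auto)
    then have hT: "T^4 * (f (u T) - m) \<le> t1^4 * (f (u t1) - m) - c*t1 + c*T"
      using T unfolding h_def by (simp add: algebra_simps)
    have "f (u T) - m \<le> (t1^4 * (f (u t1) - m) - c*t1 + c*T) / T^4"
      using hT Tpos by (simp add: pos_le_divide_eq mult.commute)
    also have "\<dots> = (t1^4 * (f (u t1) - m) - c*t1) * (1 / T^4) + c / T^3"
      using Tpos by (simp add: field_simps power4_eq_xxxx power3_eq_cube)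
    finally show "f (u T) - (INF x. f x) \<le>
             (t1 ^ 4 * (f (u t1) - (INF x. f x)) - (\<alpha> - 2) * E t1 * t1) * (1 / T ^ 4)
             + (\<alpha> - 2) * E t1 / T ^ 3"
      unfolding m_def c_def .
  qed
  have part4: "\<beta> > 0 \<longrightarrow>
             (\<lambda>t. t ^ 4 * (norm (gradf (u t + (t / 4) *\<^sub>R u' t)))\<^sup>2) integrable_on {t1..}
           \<and> integral {t1..} (\<lambda>t. t ^ 4 * (norm (gradf (u t + (t / 4) *\<^sub>R u' t)))\<^sup>2)
               \<le> (\<alpha> - 2) * E t1 / \<beta>"
  proof
    assume bpos: "\<beta> > 0"
    define k where "k = (\<lambda>t. t ^ 4 * (norm (g t))\<^sup>2)"
    have k_eq: "(\<lambda>t. t ^ 4 * (norm (gradf (u t + (t / 4) *\<^sub>R u' t)))\<^sup>2) = k"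
      unfolding k_def g_def v_def by simp
    have k0: "k t \<ge> 0" for t unfolding k_def by simp
    have kint: "(k has_integral integral {t1..T} k) {t1..T}" for T
    proof -
      have "continuous_on {t1..T} g"
        unfolding continuous_on_eq_continuous_within
      proof
        fix x assume x: "x \<in> {t1..T}"
        then have "x \<ge> t0" using t1_ge by auto
        from has_vector_derivative_continuous[OF dg[OF this]]
        show "continuous (at x within {t1..T}) g"
          by (rule continuous_within_subset) (use t1_ge in auto)
      qed
      then have "continuous_on {t1..T} k" unfolding k_def by (intro continuous_intros)
      then show ?thesis by (intro integrable_integral integrable_continuous_real)
    qed
    define B where "B = (\<alpha> - 2) * E t1 / \<beta>"
    have Ibound: "integral {t1..T} k \<le> B" if T: "T \<ge> t1" for T
    proof -
      have "E T - E t1 \<le> -(\<beta>/(\<alpha>-2)) * integral {t1..T} k"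
      proof (rule ftc_le[where k="\<lambda>t. -(\<beta>/(\<alpha>-2)) * k t" and c=t0, OF T dE])
        show "((\<lambda>t. -(\<beta>/(\<alpha>-2)) * k t) has_integral -(\<beta>/(\<alpha>-2)) * integral {t1..T} k) {t1..T}"
          by (rule has_integral_mult_right[OF kint])
        show "E' x \<le> -(\<beta>/(\<alpha>-2)) * k x" if "x \<in> {t1..T}" for x
          using E'_le[of x] that unfolding k_def by auto
      qed (use t1_ge in auto)
      then have "(\<beta>/(\<alpha>-2)) * integral {t1..T} k \<le> E t1" using E_nonneg[OF T] by linarith
      then have "\<beta> * integral {t1..T} k \<le> (\<alpha>-2) * E t1"
        using alpha_gt by (simp add: pos_divide_le_eq mult.commute)
      then show ?thesis unfolding B_def using bpos by (simp add: pos_le_divide_eq mult.commute)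
    qed
    have Inonneg: "integral {t1..T} k \<ge> 0" for T
      using kint[of T] k0 by (intro integral_nonneg) auto
    define F where "F = (\<lambda>n::nat. \<lambda>x. if x \<in> {t1..t1 + real n} then k x else 0)"
    have F_int: "(F n has_integral integral {t1..t1 + real n} k) {t1..}" for n
      unfolding F_def by (subst has_integral_restrict) (auto intro: kint)
    have mc: "k integrable_on {t1..} \<and> ((\<lambda>n. integral {t1..} (F n)) \<longlongrightarrow> integral {t1..} k) sequentially"
    proof (rule monotone_convergence_increasing)
      show "F n integrable_on {t1..}" for n using F_int by blast
      show "F n x \<le> F (Suc n) x" if "x \<in> {t1..}" for n x
        unfolding F_def using k0 by auto
      show "((\<lambda>n. F n x) \<longlongrightarrow> k x) sequentially" if "x \<in> {t1..}" for x
      proof (rule tendsto_eventually)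
        obtain N :: nat where "x - t1 \<le> real N" using real_arch_simple by blast
        then show "\<forall>\<^sub>F n in sequentially. F n x = k x"
          unfolding eventually_sequentially F_def using that
          by (intro exI[of _ N]) (auto intro: order_trans)
      qed
      show "bounded (range (\<lambda>n. integral {t1..} (F n)))"
        unfolding bounded_real
      proof (intro exI ballI)
        fix y assume "y \<in> range (\<lambda>n. integral {t1..} (F n))"
        then obtain n where y: "y = integral {t1..t1 + real n} k"
          using F_int integral_unique by blast
        show "\<bar>y\<bar> \<le> B" using y Ibound[of "t1 + real n"] Inonneg[of "t1 + real n"] by simp
      qed
    qed
    have "integral {t1..} k \<le> B"
    proof (rule tendsto_upperbound[OF conjunct2[OF mc]])
      show "\<forall>\<^sub>F n in sequentially. integral {t1..} (F n) \<le> B"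
      proof (intro always_eventually allI)
        fix n :: nat
        have "integral {t1..} (F n) = integral {t1..t1 + real n} k" using F_int[of n] by (rule integral_unique)
        then show "integral {t1..} (F n) \<le> B" using Ibound[of "t1 + real n"] by simp
      qed
    qed simp
    then have Ik: "integral {t1..} k \<le> (\<alpha> - 2) * E t1 / \<beta>" unfolding B_def .
    show "(\<lambda>t. t ^ 4 * (norm (gradf (u t + (t / 4) *\<^sub>R u' t)))\<^sup>2) integrable_on {t1..}
           \<and> integral {t1..} (\<lambda>t. t ^ 4 * (norm (gradf (u t + (t / 4) *\<^sub>R u' t)))\<^sup>2)
               \<le> (\<alpha> - 2) * E t1 / \<beta>"
      unfolding k_eq using conjunct1[OF mc] Ik by (rule conjI)
  qed
  show ?thesis by (intro conjI part1 part2 part3 part4)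
qed

end
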